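(* Let $x_0\in(0,1)$ and let $p\in C([0,1])$ with $p>0$ on $[0,1]\setminus\{x_0\}$, $p(x_0)=0$, and suppose there exists $q>1$ such that $x\mapsto p(x)/|x-x_0|^q$ is non increasing on the left of $x_0$ and non decreasing on the right of $x_0$. Then: 1. there exists a constant $C_{HP,1}>0$ such that for every $w\in H^1(0,1)$ with $w'(0)=w'(1)=0$, \[\int_0^1\frac{p(x)}{(x-x_0)^2}w^2(x)\,dx\le C_{HP,1}\|w\|^2_{H^1(0,1)};\] 2. for every $y_0\in[0,1]$ there exists $C_{HP,2}>0$ such that for every $w\in H^1(0,1)$ with $w'(0)=w'(1)=0$, \[\int_0^1\frac{p(x)}{(x-x_0)^2}w^2(x)\,dx\le C_{HP,2}\Big(\int_0^1(w')^2(y)\,dy+w^2(y_0)\Big).\] *)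

theory Defs
  imports "HOL-Analysis.Analysis"
begin

text \<open>\<open>H1_with_deriv w g\<close>: the function w belongs to H^1(0,1) (in its absolutely
continuous representative) and g is (a representative of) its weak derivative w',
i.e. g is square integrable on [0,1] and w(x) = w(0) + integral of g over [0,x]
for all x in [0,1].\<close>
definition H1_with_deriv :: "(real \<Rightarrow> real) \<Rightarrow> (real \<Rightarrow> real) \<Rightarrow> bool" where
  "H1_with_deriv w g \<longleftrightarrow>
     g \<in> borel_measurable lborel \<and>
     set_integrable lborel {0..1} (\<lambda>x. (g x)\<^sup>2) \<and>
     (\<forall>x\<in>{0..1}. w x = w 0 + (LBINT t=0..x. g t))"

definition H1_norm_sq :: "(real \<Rightarrow> real) \<Rightarrow> (real \<Rightarrow> real) \<Rightarrow> real" where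
  "H1_norm_sq w g = (LINT x:{0..1}|lborel. (w x)\<^sup>2) + (LINT x:{0..1}|lborel. (g x)\<^sup>2)"

end

theory Submission
  imports Defs
begin

lemma g_int:
  assumes "H1_with_deriv w g" shows "set_integrable lborel {0..1::real} g"
proof -
  have gm: "g \<in> borel_measurable lborel" and g2: "set_integrable lborel {0..1} (\<lambda>x. (g x)\<^sup>2)"
    using assms unfolding H1_with_deriv_def by auto
  have c: "set_integrable lborel {0..1::real} (\<lambda>x. 1::real)"
    by (simp add: set_integrable_def)
  have s: "set_integrable lborel {0..1::real} (\<lambda>x. 1 + (g x)\<^sup>2)"
    using set_integral_add(1)[OF c g2] by simp
  show ?thesis
  proof (rule set_integrable_bound[OF s])
    show "set_borel_measurable lborel {0..1} g" using gm unfolding set_borel_measurable_def by measurable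
    show "AE x in lborel. x \<in> {0..1} \<longrightarrow> norm (g x) \<le> norm (1 + (g x)\<^sup>2)"
    proof (intro AE_I2 impI)
      fix x
      have "0 \<le> (\<bar>g x\<bar> - 1/2)\<^sup>2" by simp
      then have "\<bar>g x\<bar> \<le> 1 + (g x)\<^sup>2" by (simp add: power2_eq_square algebra_simps)
      then show "norm (g x) \<le> norm (1 + (g x)\<^sup>2)" by simp
    qed
  qed
qed


lemma I_bound:
  assumes H: "H1_with_deriv w g" and x: "0 \<le> x" "x \<le> (1::real)"
  shows "\<bar>LBINT t=0..x. g t\<bar> \<le> sqrt (LINT t:{0..1}|lborel. (g t)\<^sup>2)"
proof -
  define S where "S = (LINT t:{0..1}|lborel. (g t)\<^sup>2)"
  have gm[measurable]: "g \<in> borel_measurable borel" and g2: "set_integrable lborel {0..1} (\<lambda>x. (g x)\<^sup>2)"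
    using H unfolding H1_with_deriv_def by auto
  have gi: "set_integrable lborel {0..x} g"
    by (rule set_integrable_subset[OF g_int[OF H]]) (use x in auto)
  have eq: "(LBINT t=0..x. g t) = integral\<^sup>L lborel (\<lambda>t. indicator {0..x} t *\<^sub>R g t)"
    using interval_integral_Icc[of 0 x g] x by (simp add: set_lebesgue_integral_def zero_ereal_def)
  have n1: "ennreal \<bar>LBINT t=0..x. g t\<bar> \<le> (\<integral>\<^sup>+t. ennreal (norm (indicator {0..x} t *\<^sub>R g t)) \<partial>lborel)"
    unfolding eq using integral_norm_bound_ennreal[of lborel "\<lambda>t. indicator {0..x} t *\<^sub>R g t"] gi
    unfolding set_integrable_def by simp
  define E where "E = (\<integral>\<^sup>+t. ennreal (indicator {0..1} t * \<bar>g t\<bar>) \<partial>lborel)"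
  have n2: "(\<integral>\<^sup>+t. ennreal (norm (indicator {0..x} t *\<^sub>R g t)) \<partial>lborel) \<le> E"
    unfolding E_def by (intro nn_integral_mono) (use x in \<open>auto simp: indicator_def\<close>)
  have cs: "(\<integral>\<^sup>+t. ennreal (indicator {0..1} t * \<bar>g t\<bar>) * ennreal (indicator {0..1} t) \<partial>lborel)\<^sup>2
     \<le> (\<integral>\<^sup>+t. (ennreal (indicator {0..1} t * \<bar>g t\<bar>))^2 \<partial>lborel) * (\<integral>\<^sup>+t. (ennreal (indicator {0..1} (t::real)))^2 \<partial>lborel)"
  proof -
    have m1: "(\<lambda>t. ennreal (indicator {0..1} t * \<bar>g t\<bar>)) \<in> borel_measurable lborel" by measurable
    have m2: "(\<lambda>t. ennreal (indicator {0..1::real} t)) \<in> borel_measurable lborel" by measurable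
    show ?thesis using Cauchy_Schwarz_nn_integral[OF m1 m2] by simp
  qed
  have e1: "(\<integral>\<^sup>+t. ennreal (indicator {0..1} t * \<bar>g t\<bar>) * ennreal (indicator {0..1} t) \<partial>lborel) = E"
    unfolding E_def by (intro nn_integral_cong) (auto simp: indicator_def)
  have e2: "(\<integral>\<^sup>+t. (ennreal (indicator {0..1} (t::real)))^2 \<partial>lborel) = 1"
  proof -
    have "(\<integral>\<^sup>+t. (ennreal (indicator {0..1} (t::real)))^2 \<partial>lborel) = (\<integral>\<^sup>+t. indicator {0..1::real} t \<partial>lborel)"
      by (intro nn_integral_cong) (auto simp: indicator_def)
    also have "\<dots> = 1" by simp
    finally show ?thesis .
  qed
  have e3: "(\<integral>\<^sup>+t. (ennreal (indicator {0..1} t * \<bar>g t\<bar>))^2 \<partial>lborel) = ennreal S"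
  proof -
    have "(\<integral>\<^sup>+t. (ennreal (indicator {0..1} t * \<bar>g t\<bar>))^2 \<partial>lborel)
        = (\<integral>\<^sup>+t. ennreal (indicator {0..1} t *\<^sub>R (g t)\<^sup>2) \<partial>lborel)"
      by (intro nn_integral_cong) (auto simp: indicator_def ennreal_power)
    also have "\<dots> = ennreal (integral\<^sup>L lborel (\<lambda>t. indicator {0..1} t *\<^sub>R (g t)\<^sup>2))"
      by (rule nn_integral_eq_integral) (use g2 in \<open>auto simp: set_integrable_def\<close>)
    also have "\<dots> = ennreal S" by (simp add: S_def set_lebesgue_integral_def)
    finally show ?thesis .
  qed
  have S0: "S \<ge> 0" unfolding S_def set_lebesgue_integral_def by (rule integral_nonneg_AE) (auto simp: indicator_def)
  have "(ennreal \<bar>LBINT t=0..x. g t\<bar>)\<^sup>2 \<le> E\<^sup>2"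
    using n1 n2 by (intro power_mono) auto
  also have "\<dots> \<le> ennreal S" using cs e1 e2 e3 by simp
  finally have "ennreal ((\<bar>LBINT t=0..x. g t\<bar>)\<^sup>2) \<le> ennreal S" by (simp add: ennreal_power)
  then have "(\<bar>LBINT t=0..x. g t\<bar>)\<^sup>2 \<le> S" using S0 by (simp add: ennreal_le_iff)
  then show ?thesis unfolding S_def[symmetric] by (simp add: real_le_rsqrt)
qed


lemma w_bound:
  assumes H: "H1_with_deriv w g" and x: "x \<in> {0..1::real}" and y: "y \<in> {0..1::real}"
  shows "(w x)\<^sup>2 \<le> 2 * (w y)\<^sup>2 + 8 * (LINT t:{0..1}|lborel. (g t)\<^sup>2)"
proof -
  define S where "S = (LINT t:{0..1}|lborel. (g t)\<^sup>2)"
  have S0: "S \<ge> 0" unfolding S_def set_lebesgue_integral_def by (rule integral_nonneg_AE) (auto simp: indicator_def)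
  have wx: "w x = w 0 + (LBINT t=0..x. g t)" and wy: "w y = w 0 + (LBINT t=0..y. g t)"
  proof -
    have "\<forall>x\<in>{0..1}. w x = w 0 + (LBINT t=0..x. g t)" using H unfolding H1_with_deriv_def by blast
    then show "w x = w 0 + (LBINT t=0..x. g t)" "w y = w 0 + (LBINT t=0..y. g t)" using x y by blast+
  qed
  have bx: "\<bar>LBINT t=0..x. g t\<bar> \<le> sqrt S" using I_bound[OF H, of x] x unfolding S_def by simp
  have by': "\<bar>LBINT t=0..y. g t\<bar> \<le> sqrt S" using I_bound[OF H, of y] y unfolding S_def by simp
  have d: "\<bar>w x - w y\<bar> \<le> 2 * sqrt S" using bx by' wx wy by linarith
  have "(w x - w y)\<^sup>2 \<le> (2 * sqrt S)\<^sup>2"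
  proof -
    have "(w x - w y)\<^sup>2 = \<bar>w x - w y\<bar>\<^sup>2" by simp
    also have "\<dots> \<le> (2 * sqrt S)\<^sup>2" by (rule power_mono[OF d]) simp
    finally show ?thesis .
  qed
  also have "\<dots> = 4 * S" using S0 by (simp add: power_mult_distrib)
  finally have e: "(w x - w y)\<^sup>2 \<le> 4 * S" .
  have "(w x)\<^sup>2 \<le> 2 * (w y)\<^sup>2 + 2 * (w x - w y)\<^sup>2"
  proof -
    have "0 \<le> (w x - 2 * w y)\<^sup>2" by simp
    then show ?thesis unfolding power2_eq_square by (simp add: algebra_simps)
  qed
  with e show ?thesis unfolding S_def[symmetric] by linarith
qed

lemma J_bound:
  assumes a: "a > (-1::real)" and x0: "0 \<le> x\<^sub>0" "x\<^sub>0 \<le> (1::real)"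
  shows "(\<integral>\<^sup>+x. ennreal (\<bar>x - x\<^sub>0\<bar> powr a) * indicator {0..1} x \<partial>lborel) \<le> ennreal (2 / (a+1))"
proof -
  define f where "f = (\<lambda>x::real. indicator {0..1} x * x powr a)"
  have fm[measurable]: "f \<in> borel_measurable borel" unfolding f_def by measurable
  have f0: "\<And>x. f x \<ge> 0" unfolding f_def by (auto simp: indicator_def)
  have hi: "(f has_integral (1 / (a+1))) UNIV"
  proof -
    have "((\<lambda>x. x powr a) has_integral (1 / (a+1))) {0..1}"
      using has_integral_powr_from_0[of a 1] a by simp
    then have "((\<lambda>x. if x \<in> {0..1} then x powr a else 0) has_integral (1 / (a+1))) UNIV"
      by (subst has_integral_restrict_UNIV)
    moreover have "(\<lambda>x. if x \<in> {0..1} then x powr a else 0) = f"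
      unfolding f_def by (auto simp: indicator_def)
    ultimately show ?thesis by simp
  qed
  have I1: "(\<integral>\<^sup>+x. ennreal (f x) \<partial>lborel) = ennreal (1 / (a+1))"
    using nn_integral_has_integral_lborel[OF fm f0 hi] by simp
  have I2: "(\<integral>\<^sup>+x. ennreal (f (- x)) \<partial>lborel) = ennreal (1 / (a+1))"
    using nn_integral_real_affine[of "\<lambda>x. ennreal (f x)" "-1" 0] I1 by simp
  define h where "h = (\<lambda>x. ennreal (\<bar>x - x\<^sub>0\<bar> powr a) * indicator {0..1} x)"
  have hm: "h \<in> borel_measurable borel" unfolding h_def by measurable
  have "(\<integral>\<^sup>+x. h x \<partial>lborel) = (\<integral>\<^sup>+x. h (x\<^sub>0 + x) \<partial>lborel)"
    using nn_integral_real_affine[OF hm, of 1 x\<^sub>0] by simp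
  also have "\<dots> \<le> (\<integral>\<^sup>+x. ennreal (f x) + ennreal (f (- x)) \<partial>lborel)"
  proof (intro nn_integral_mono)
    fix x :: real
    show "h (x\<^sub>0 + x) \<le> ennreal (f x) + ennreal (f (- x))"
    proof (cases "x\<^sub>0 + x \<in> {0..1}")
      case True
      show ?thesis
      proof (cases "x \<ge> 0")
        case True
        with \<open>x\<^sub>0 + x \<in> {0..1}\<close> x0 have "x \<in> {0..1}" by auto
        then show ?thesis using True \<open>x\<^sub>0 + x \<in> {0..1}\<close> unfolding h_def f_def by (auto simp: indicator_def)
      next
        case False
        with \<open>x\<^sub>0 + x \<in> {0..1}\<close> x0 have "-x \<in> {0..1}" by auto
        then show ?thesis using False \<open>x\<^sub>0 + x \<in> {0..1}\<close> unfolding h_def f_def by (auto simp: indicator_def)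
      qed
    next
      case False
      then show ?thesis unfolding h_def by simp
    qed
  qed
  also have "\<dots> = (\<integral>\<^sup>+x. ennreal (f x) \<partial>lborel) + (\<integral>\<^sup>+x. ennreal (f (- x)) \<partial>lborel)"
    by (rule nn_integral_add) measurable
  also have "\<dots> = ennreal (2 / (a+1))" using I1 I2 a by (simp flip: ennreal_plus)
  finally show ?thesis unfolding h_def .
qed



lemma w_cont:
  assumes H: "H1_with_deriv w g" shows "continuous_on {0..1::real} w"
proof -
  have gi: "set_integrable lborel {0..1} g" by (rule g_int[OF H])
  have gio: "g integrable_on {0..1}" using set_borel_integral_eq_integral(1)[OF gi] .
  have eq: "\<forall>x\<in>{0..1}. w x = w 0 + integral {0..x} g"
  proof
    fix x :: real assume x: "x \<in> {0..1}"
    have "\<forall>x\<in>{0..1}. w x = w 0 + (LBINT t=0..x. g t)" using H unfolding H1_with_deriv_def by blast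
    then have "w x = w 0 + (LBINT t=0..x. g t)" using x by blast
    also have "(LBINT t=0..x. g t) = integral {0..x} g"
      using interval_integral_eq_integral[of 0 x g] set_integrable_subset[OF gi, of "{0..x}"] x
      by (simp add: zero_ereal_def)
    finally show "w x = w 0 + integral {0..x} g" .
  qed
  have "continuous_on {0..1} (\<lambda>x. w 0 + integral {0..x} g)"
    by (intro continuous_intros indefinite_integral_continuous_1 gio)
  then show ?thesis using continuous_on_cong[OF refl, of "{0..1}" w "\<lambda>x. w 0 + integral {0..x} g"] eq by blast
qed

lemma w_sup:
  assumes H: "H1_with_deriv w g" and x: "x \<in> {0..1::real}"
  shows "(w x)\<^sup>2 \<le> 8 * H1_norm_sq w g"
proof -
  have c: "continuous_on {0..1::real} (\<lambda>x. (w x)\<^sup>2)" by (intro continuous_intros w_cont[OF H])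
  obtain y where y: "y \<in> {0..1}" and ymin: "\<forall>z\<in>{0..1}. (w y)\<^sup>2 \<le> (w z)\<^sup>2"
    using continuous_attains_inf[OF compact_Icc _ c] by auto
  have i1: "set_integrable lborel {0..1::real} (\<lambda>x. (w x)\<^sup>2)"
    unfolding set_integrable_def by (rule borel_integrable_compact[OF compact_Icc c])
  have i2: "set_integrable lborel {0..1::real} (\<lambda>x. (w y)\<^sup>2)"
    unfolding set_integrable_def by (rule borel_integrable_compact[OF compact_Icc continuous_on_const])
  have "(LINT z:{0..1::real}|lborel. (w y)\<^sup>2) \<le> (LINT z:{0..1}|lborel. (w z)\<^sup>2)"
    using set_integral_mono[OF i2 i1] ymin by simp
  moreover have "(LINT z:{0..1::real}|lborel. (w y)\<^sup>2) = (w y)\<^sup>2"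
    by (simp add: set_lebesgue_integral_def)
  ultimately have m: "(w y)\<^sup>2 \<le> (LINT z:{0..1}|lborel. (w z)\<^sup>2)" by simp
  have S0: "(LINT t:{0..1}|lborel. (g t)\<^sup>2) \<ge> 0" unfolding set_lebesgue_integral_def by (rule integral_nonneg_AE) (auto simp: indicator_def)
  have "(w y)\<^sup>2 \<ge> 0" by simp
  moreover note w_bound[OF H x y] m S0
  moreover have "H1_norm_sq w g = (LINT z:{0..1}|lborel. (w z)\<^sup>2) + (LINT t:{0..1}|lborel. (g t)\<^sup>2)"
    unfolding H1_norm_sq_def by simp
  ultimately show ?thesis by linarith
qed

lemma K_exists:
  fixes p :: "real \<Rightarrow> real" and x\<^sub>0 q :: real
  assumes x0': "0 < x\<^sub>0" "x\<^sub>0 < 1"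
    and ppos: "\<forall>x\<in>{0..1} - {x\<^sub>0}. p x > 0"
    and mono_left: "\<forall>x\<in>{0..<x\<^sub>0}. \<forall>y\<in>{0..<x\<^sub>0}. x \<le> y \<longrightarrow>
                     p y / \<bar>y - x\<^sub>0\<bar> powr q \<le> p x / \<bar>x - x\<^sub>0\<bar> powr q"
    and mono_right: "\<forall>x\<in>{x\<^sub>0<..1}. \<forall>y\<in>{x\<^sub>0<..1}. x \<le> y \<longrightarrow>
                     p x / \<bar>x - x\<^sub>0\<bar> powr q \<le> p y / \<bar>y - x\<^sub>0\<bar> powr q"
  shows "\<exists>K\<ge>0. \<forall>x\<in>{0..1}. p x / (x - x\<^sub>0)\<^sup>2 \<le> K * \<bar>x - x\<^sub>0\<bar> powr (q - 2)"
proof -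
  define K where "K = max (p 0 / \<bar>0 - x\<^sub>0\<bar> powr q) (p 1 / \<bar>1 - x\<^sub>0\<bar> powr q)"
  have "p 0 > 0" using ppos x0' by auto
  then have K0: "K \<ge> 0" unfolding K_def by (simp add: le_max_iff_disj)
  have pb: "p x / (x - x\<^sub>0)\<^sup>2 \<le> K * \<bar>x - x\<^sub>0\<bar> powr (q - 2)" if x: "x \<in> {0..1}" for x
  proof (cases "x = x\<^sub>0")
    case True
    then show ?thesis using K0 by simp
  next
    case False
    have d: "\<bar>x - x\<^sub>0\<bar> > 0" using False by simp
    have r: "p x / \<bar>x - x\<^sub>0\<bar> powr q \<le> K"
    proof (cases "x < x\<^sub>0")
      case True
      have "p x / \<bar>x - x\<^sub>0\<bar> powr q \<le> p 0 / \<bar>0 - x\<^sub>0\<bar> powr q"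
        using mono_left[rule_format, of 0 x] x True x0' by auto
      then show ?thesis unfolding K_def by linarith
    next
      case False
      then have "x > x\<^sub>0" using \<open>x \<noteq> x\<^sub>0\<close> by simp
      then have "p x / \<bar>x - x\<^sub>0\<bar> powr q \<le> p 1 / \<bar>1 - x\<^sub>0\<bar> powr q"
        using mono_right[rule_format, of x 1] x x0' by auto
      then show ?thesis unfolding K_def by linarith
    qed
    have pq: "p x \<le> K * \<bar>x - x\<^sub>0\<bar> powr q"
      using r d by (simp add: divide_le_eq)
    have "p x / (x - x\<^sub>0)\<^sup>2 = p x / \<bar>x - x\<^sub>0\<bar> powr 2"
      using d by (simp add: powr_numeral)
    also have "\<dots> \<le> K * \<bar>x - x\<^sub>0\<bar> powr q / \<bar>x - x\<^sub>0\<bar> powr 2"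
      using pq d by (intro divide_right_mono) auto
    also have "\<dots> = K * \<bar>x - x\<^sub>0\<bar> powr (q - 2)"
      using d by (simp add: powr_diff)
    finally show ?thesis .
  qed
  show ?thesis using K0 pb by blast
qed

lemma main_bound:
  fixes p w :: "real \<Rightarrow> real" and K B q x\<^sub>0 :: real
  assumes K0: "K \<ge> 0" and q: "q > 1" and x0': "0 \<le> x\<^sub>0" "x\<^sub>0 \<le> 1"
    and pb: "\<forall>x\<in>{0..1}. p x / (x - x\<^sub>0)\<^sup>2 \<le> K * \<bar>x - x\<^sub>0\<bar> powr (q - 2)"
    and B: "\<forall>x\<in>{0..1}. (w x)\<^sup>2 \<le> B"
  shows "(\<integral>\<^sup>+ x\<in>{0..1}. ennreal (p x / (x - x\<^sub>0)\<^sup>2 * (w x)\<^sup>2) \<partial>lborel) \<le> ennreal (K * B * (2 / (q - 1)))"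
proof -
  define Jr where "Jr = 2 / (q - 1)"
  have Jr0: "Jr \<ge> 0" unfolding Jr_def using q by simp
  have J: "(\<integral>\<^sup>+x. ennreal (\<bar>x - x\<^sub>0\<bar> powr (q - 2)) * indicator {0..1} x \<partial>lborel) \<le> ennreal Jr"
    using J_bound[of "q - 2" x\<^sub>0] q x0' unfolding Jr_def by simp
  have "(w 0)\<^sup>2 \<le> B" using B by simp
  moreover have "(w 0)\<^sup>2 \<ge> 0" by simp
  ultimately have B0: "B \<ge> 0" by linarith
  have "(\<integral>\<^sup>+ x\<in>{0..1}. ennreal (p x / (x - x\<^sub>0)\<^sup>2 * (w x)\<^sup>2) \<partial>lborel)
      \<le> (\<integral>\<^sup>+x. ennreal (K * B) * (ennreal (\<bar>x - x\<^sub>0\<bar> powr (q - 2)) * indicator {0..1} x) \<partial>lborel)"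
  proof (intro nn_integral_mono)
    fix x :: real
    show "ennreal (p x / (x - x\<^sub>0)\<^sup>2 * (w x)\<^sup>2) * indicator {0..1} x
        \<le> ennreal (K * B) * (ennreal (\<bar>x - x\<^sub>0\<bar> powr (q - 2)) * indicator {0..1} x)"
    proof (cases "x \<in> {0..1}")
      case True
      have "p x / (x - x\<^sub>0)\<^sup>2 * (w x)\<^sup>2 \<le> (K * \<bar>x - x\<^sub>0\<bar> powr (q - 2)) * B"
        using pb B True K0 by (intro mult_mono) auto
      then have "ennreal (p x / (x - x\<^sub>0)\<^sup>2 * (w x)\<^sup>2) \<le> ennreal (K * B) * ennreal (\<bar>x - x\<^sub>0\<bar> powr (q - 2))"
        using K0 B0 by (simp add: ennreal_mult'' [symmetric] ennreal_leI mult_ac)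
      then show ?thesis using True by simp
    next
      case False
      then show ?thesis by simp
    qed
  qed
  also have "\<dots> = ennreal (K * B) * (\<integral>\<^sup>+x. ennreal (\<bar>x - x\<^sub>0\<bar> powr (q - 2)) * indicator {0..1} x \<partial>lborel)"
    by (rule nn_integral_cmult) measurable
  also have "\<dots> \<le> ennreal (K * B) * ennreal Jr"
    by (rule mult_left_mono[OF J]) simp
  also have "\<dots> = ennreal (K * B * Jr)" using K0 B0 Jr0 by (simp add: ennreal_mult)
  finally show ?thesis unfolding Jr_def .
qed

lemma part1:
  fixes p w g :: "real \<Rightarrow> real" and K q x\<^sub>0 :: real
  assumes K0: "K \<ge> 0" and q: "q > 1" and x0': "0 \<le> x\<^sub>0" "x\<^sub>0 \<le> 1"
    and pb: "\<forall>x\<in>{0..1}. p x / (x - x\<^sub>0)\<^sup>2 \<le> K * \<bar>x - x\<^sub>0\<bar> powr (q - 2)"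
    and H: "H1_with_deriv w g"
  shows "(\<integral>\<^sup>+ x\<in>{0..1}. ennreal (p x / (x - x\<^sub>0)\<^sup>2 * (w x)\<^sup>2) \<partial>lborel)
      \<le> ennreal ((8 * K * (2 / (q - 1)) + 1) * H1_norm_sq w g)"
proof -
  define N where "N = H1_norm_sq w g"
  define Jr where "Jr = 2 / (q - 1)"
  have Jr0: "Jr \<ge> 0" unfolding Jr_def using q by simp
  have "(w 0)\<^sup>2 \<le> 8 * N" using w_sup[OF H, of 0] unfolding N_def by simp
  moreover have "(w 0)\<^sup>2 \<ge> 0" by simp
  ultimately have N0: "N \<ge> 0" by linarith
  have Bw: "\<forall>x\<in>{0..1}. (w x)\<^sup>2 \<le> 8 * N" using w_sup[OF H] unfolding N_def by blast
  have "(\<integral>\<^sup>+ x\<in>{0..1}. ennreal (p x / (x - x\<^sub>0)\<^sup>2 * (w x)\<^sup>2) \<partial>lborel) \<le> ennreal (K * (8 * N) * Jr)"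
    using main_bound[OF K0 q x0' pb Bw] unfolding Jr_def .
  also have "\<dots> \<le> ennreal ((8 * K * Jr + 1) * N)"
    using K0 Jr0 N0 by (intro ennreal_leI) (simp add: algebra_simps)
  finally show ?thesis unfolding N_def Jr_def .
qed

lemma part2:
  fixes p w g :: "real \<Rightarrow> real" and K q x\<^sub>0 y\<^sub>0 :: real
  assumes K0: "K \<ge> 0" and q: "q > 1" and x0': "0 \<le> x\<^sub>0" "x\<^sub>0 \<le> 1"
    and pb: "\<forall>x\<in>{0..1}. p x / (x - x\<^sub>0)\<^sup>2 \<le> K * \<bar>x - x\<^sub>0\<bar> powr (q - 2)"
    and H: "H1_with_deriv w g" and y0: "y\<^sub>0 \<in> {0..1}"
  shows "(\<integral>\<^sup>+ x\<in>{0..1}. ennreal (p x / (x - x\<^sub>0)\<^sup>2 * (w x)\<^sup>2) \<partial>lborel)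
      \<le> ennreal ((8 * K * (2 / (q - 1)) + 1) * ((LINT y:{0..1}|lborel. (g y)\<^sup>2) + (w y\<^sub>0)\<^sup>2))"
proof -
  define S where "S = (LINT y:{0..1}|lborel. (g y)\<^sup>2)"
  define Jr where "Jr = 2 / (q - 1)"
  have Jr0: "Jr \<ge> 0" unfolding Jr_def using q by simp
  have S0: "S \<ge> 0" unfolding S_def set_lebesgue_integral_def by (rule integral_nonneg_AE) (auto simp: indicator_def)
  have Bw: "\<forall>x\<in>{0..1}. (w x)\<^sup>2 \<le> 2 * (w y\<^sub>0)\<^sup>2 + 8 * S"
    using w_bound[OF H _ y0] unfolding S_def by blast
  have "(\<integral>\<^sup>+ x\<in>{0..1}. ennreal (p x / (x - x\<^sub>0)\<^sup>2 * (w x)\<^sup>2) \<partial>lborel) \<le> ennreal (K * (2 * (w y\<^sub>0)\<^sup>2 + 8 * S) * Jr)"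
    using main_bound[OF K0 q x0' pb Bw] unfolding Jr_def .
  also have "\<dots> \<le> ennreal ((8 * K * Jr + 1) * (S + (w y\<^sub>0)\<^sup>2))"
  proof (intro ennreal_leI)
    have "K * (2 * (w y\<^sub>0)\<^sup>2 + 8 * S) * Jr \<le> K * (8 * (w y\<^sub>0)\<^sup>2 + 8 * S) * Jr"
      using K0 Jr0 by (intro mult_right_mono mult_left_mono) auto
    also have "\<dots> \<le> (8 * K * Jr + 1) * (S + (w y\<^sub>0)\<^sup>2)"
      using K0 Jr0 S0 by (simp add: algebra_simps)
    finally show "K * (2 * (w y\<^sub>0)\<^sup>2 + 8 * S) * Jr \<le> (8 * K * Jr + 1) * (S + (w y\<^sub>0)\<^sup>2)" .
  qed
  finally show ?thesis unfolding S_def Jr_def .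
qed

theorem corollary2p10:
  fixes p :: "real \<Rightarrow> real" and x\<^sub>0 q :: real
  assumes x0: "x\<^sub>0 \<in> {0<..<1}"
    and pcont: "continuous_on {0..1} p"
    and ppos: "\<forall>x\<in>{0..1} - {x\<^sub>0}. p x > 0"
    and pzero: "p x\<^sub>0 = 0"
    and q: "q > 1"
    and mono_left: "\<forall>x\<in>{0..<x\<^sub>0}. \<forall>y\<in>{0..<x\<^sub>0}. x \<le> y \<longrightarrow>
                     p y / \<bar>y - x\<^sub>0\<bar> powr q \<le> p x / \<bar>x - x\<^sub>0\<bar> powr q"
    and mono_right: "\<forall>x\<in>{x\<^sub>0<..1}. \<forall>y\<in>{x\<^sub>0<..1}. x \<le> y \<longrightarrow>
                     p x / \<bar>x - x\<^sub>0\<bar> powr q \<le> p y / \<bar>y - x\<^sub>0\<bar> powr q"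
  shows "(\<exists>C>0. \<forall>w g. H1_with_deriv w g
              \<and> (w has_real_derivative 0) (at 0 within {0..1})
              \<and> (w has_real_derivative 0) (at 1 within {0..1}) \<longrightarrow>
            (\<integral>\<^sup>+ x\<in>{0..1}. ennreal (p x / (x - x\<^sub>0)\<^sup>2 * (w x)\<^sup>2) \<partial>lborel)
              \<le> ennreal (C * H1_norm_sq w g))
       \<and> (\<forall>y\<^sub>0\<in>{0..1}. \<exists>C>0. \<forall>w g. H1_with_deriv w g
              \<and> (w has_real_derivative 0) (at 0 within {0..1})
              \<and> (w has_real_derivative 0) (at 1 within {0..1}) \<longrightarrow>
            (\<integral>\<^sup>+ x\<in>{0..1}. ennreal (p x / (x - x\<^sub>0)\<^sup>2 * (w x)\<^sup>2) \<partial>lborel)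
              \<le> ennreal (C * ((LINT y:{0..1}|lborel. (g y)\<^sup>2) + (w y\<^sub>0)\<^sup>2)))"
proof -
  have x0': "0 < x\<^sub>0" "x\<^sub>0 < 1" using x0 by auto
  obtain K where K0: "K \<ge> 0" and pb: "\<forall>x\<in>{0..1}. p x / (x - x\<^sub>0)\<^sup>2 \<le> K * \<bar>x - x\<^sub>0\<bar> powr (q - 2)"
    using K_exists[OF x0' ppos mono_left mono_right] by blast
  define C where "C = 8 * K * (2 / (q - 1)) + 1"
  have "0 \<le> K * (2 / (q - 1))" using K0 q by simp
  then have C0: "C > 0" unfolding C_def by (simp add: mult.assoc)
  have x0'': "0 \<le> x\<^sub>0" "x\<^sub>0 \<le> 1" using x0' by auto
  have P1: "\<forall>w g. H1_with_deriv w g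
              \<and> (w has_real_derivative 0) (at 0 within {0..1})
              \<and> (w has_real_derivative 0) (at 1 within {0..1}) \<longrightarrow>
            (\<integral>\<^sup>+ x\<in>{0..1}. ennreal (p x / (x - x\<^sub>0)\<^sup>2 * (w x)\<^sup>2) \<partial>lborel)
              \<le> ennreal (C * H1_norm_sq w g)"
    using part1[OF K0 q x0'' pb] unfolding C_def by blast
  have P2: "\<forall>y\<^sub>0\<in>{0..1}. \<forall>w g. H1_with_deriv w g
              \<and> (w has_real_derivative 0) (at 0 within {0..1})
              \<and> (w has_real_derivative 0) (at 1 within {0..1}) \<longrightarrow>
            (\<integral>\<^sup>+ x\<in>{0..1}. ennreal (p x / (x - x\<^sub>0)\<^sup>2 * (w x)\<^sup>2) \<partial>lborel)
              \<le> ennreal (C * ((LINT y:{0..1}|lborel. (g y)\<^sup>2) + (w y\<^sub>0)\<^sup>2))"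
    using part2[OF K0 q x0'' pb] unfolding C_def by blast
  show ?thesis using P1 P2 C0 by blast
qed

end
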